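(* Let $S_{\mathrm{even}}$ (resp. $S_{\mathrm{odd}}$) be the set of the 24 consonant triads whose root is even (resp. odd). The functions $L$ and $R$ map $S_{\mathrm{even}}$ to itself and $S_{\mathrm{odd}}$ to itself, and the group of permutations of $S_{\mathrm{even}}$ generated by the restrictions of $L$ and $R$ is isomorphic to the dihedral group $D_{12}$ of order 24; likewise the group of permutations of $S_{\mathrm{odd}}$ generated by the restrictions of $L$ and $R$ is isomorphic to $D_{12}$.
   Context: Pitch classes are elements of $\mathbb{Z}_{24}$ (even residues: original tones; odd residues: new tones). For $n\in\mathbb{Z}_{24}$, $I_n(y)=-y+n\pmod{24}$, applied componentwise to ordered triples. Consonant triads are written as ordered triples: the major triad with root $x$ is $\langle x,x+8,x+14\rangle$ and the minor triad with root $x$ is $\langle x+14,x+6,x\rangle$ (underlying sets $\{x,x+8,x+14\}$ and $\{x,x+6,x+14\}$); there are 48 consonant triads. Define $L\langle y_1,y_2,y_3\rangle=I_{y_2+y_3}\langle y_1,y_2,y_3\rangle$ and $R\langle y_1,y_2,y_3\rangle=I_{y_1+y_2}\langle y_1,y_2,y_3\rangle$, which send consonant triads to consonant triads. $D_{12}$ denotes the group $\langle x,y\mid x^{12}=y^2=1,\ yxy=x^{-1}\rangle$ of order 24. *)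

theory Defs
  imports "HOL-Algebra.Algebra"
begin

text \<open>Pitch classes in Z_24 are represented by integers in {0..23}; arithmetic is taken mod 24.
  Ordered triads are triples of such integers.\<close>

type_synonym triad = "int \<times> int \<times> int"

definition Inv :: "int \<Rightarrow> int \<Rightarrow> int" where
  "Inv n y = (n - y) mod 24"

definition Inv3 :: "int \<Rightarrow> triad \<Rightarrow> triad" where
  "Inv3 n t = (case t of (y1, y2, y3) \<Rightarrow> (Inv n y1, Inv n y2, Inv n y3))"

definition major_triad :: "int \<Rightarrow> triad" where
  "major_triad x = (x mod 24, (x + 8) mod 24, (x + 14) mod 24)"

definition minor_triad :: "int \<Rightarrow> triad" where
  "minor_triad x = ((x + 14) mod 24, (x + 6) mod 24, x mod 24)"

definition consonant_triads :: "triad set" where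
  "consonant_triads = major_triad ` {0..23} \<union> minor_triad ` {0..23}"

definition S_even :: "triad set" where
  "S_even = major_triad ` {x \<in> {0..23}. even x} \<union> minor_triad ` {x \<in> {0..23}. even x}"

definition S_odd :: "triad set" where
  "S_odd = major_triad ` {x \<in> {0..23}. odd x} \<union> minor_triad ` {x \<in> {0..23}. odd x}"

definition L_op :: "triad \<Rightarrow> triad" where
  "L_op t = (case t of (y1, y2, y3) \<Rightarrow> Inv3 (y2 + y3) (y1, y2, y3))"

definition R_op :: "triad \<Rightarrow> triad" where
  "R_op t = (case t of (y1, y2, y3) \<Rightarrow> Inv3 (y1 + y2) (y1, y2, y3))"

definition LR_group :: "triad set \<Rightarrow> (triad \<Rightarrow> triad) monoid" where
  "LR_group S = (BijGroup S)\<lparr>carrier := generate (BijGroup S) {restrict L_op S, restrict R_op S}\<rparr>"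

text \<open>The dihedral group D_12 = <x,y | x^12 = y^2 = 1, yxy = x^-1> of order 24,
  realised concretely: (k, b) stands for x^k y^b with k in {0..11}.\<close>
definition D12 :: "(int \<times> bool) monoid" where
  "D12 = \<lparr>carrier = {0..11} \<times> (UNIV :: bool set),
          monoid.mult = (\<lambda>p q. ((fst p + (if snd p then - fst q else fst q)) mod 12, snd p \<noteq> snd q)),
          monoid.one = (0, False)\<rparr>"

end

theory Submission
  imports Defs
begin


abbreviation "MM \<equiv> major_triad"
abbreviation "mm \<equiv> minor_triad"

lemma mod3: "((a::int) mod n + b mod n - c mod n) mod n = (a + b - c) mod n"
  by (rule mod_diff_cong) (simp_all add: mod_add_eq)
lemma mod3': "((a::int) mod n + b mod n - c) mod n = (a + b - c) mod n"
  by (rule mod_diff_cong) (simp_all add: mod_add_eq)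

lemma L_op_simp: "L_op (a,b,z) = ((b + z - a) mod 24, (b+z-b) mod 24, (b+z-z) mod 24)"
  by (simp add: L_op_def Inv3_def Inv_def)
lemma R_op_simp: "R_op (a,b,z) = ((a + b - a) mod 24, (a+b-b) mod 24, (a+b-z) mod 24)"
  by (simp add: R_op_def Inv3_def Inv_def)

lemma L_M: "L_op (MM x) = mm (x + 8)"
  unfolding major_triad_def minor_triad_def L_op_simp mod3 by (simp add: algebra_simps)
lemma L_m: "L_op (mm x) = MM (x - 8)"
  unfolding major_triad_def minor_triad_def L_op_simp mod3 by (simp add: algebra_simps)
lemma R_M: "R_op (MM x) = mm (x - 6)"
  unfolding major_triad_def minor_triad_def R_op_simp mod3 by (simp add: algebra_simps)
lemma R_m: "R_op (mm x) = MM (x + 6)"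
  unfolding major_triad_def minor_triad_def R_op_simp mod3 by (simp add: algebra_simps)

lemma M_cong: "a mod 24 = b mod 24 \<Longrightarrow> MM a = MM b"
  unfolding major_triad_def by (metis mod_add_left_eq)
lemma m_cong: "a mod 24 = b mod 24 \<Longrightarrow> mm a = mm b"
  unfolding minor_triad_def by (metis mod_add_left_eq)

definition major :: "triad \<Rightarrow> bool" where
  "major t = ((fst (snd t) - fst t) mod 24 = 8)"

lemma major_M: "major (MM x)"
proof -
  have "((x+8) mod 24 - x mod 24) mod 24 = (x + 8 - x) mod 24" by (rule mod_diff_cong) simp_all
  then show ?thesis unfolding major_def major_triad_def by simp
qed
lemma major_m: "\<not> major (mm x)"
proof -
  have "((x+6) mod 24 - (x + 14) mod 24) mod 24 = (x + 6 - (x + 14)) mod 24" by (rule mod_diff_cong) simp_all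
  then show ?thesis unfolding major_def minor_triad_def by simp
qed
lemma M_ne_m: "MM x \<noteq> mm y"
  using major_M major_m by metis

definition ff :: "int \<Rightarrow> bool \<Rightarrow> triad \<Rightarrow> triad" where
  "ff k b t = (if major t then (if b then mm (fst t + (8 - 14*k)) else MM (fst t + 14*k))
     else (if b then MM (snd (snd t) + (14*k - 8)) else mm (snd (snd t) + (- 14*k))))"

lemma ff_M: "ff k b (MM x) = (if b then mm (x + (8 - 14*k)) else MM (x + 14*k))"
proof -
  have "fst (MM x) = x mod 24" by (simp add: major_triad_def)
  then show ?thesis using major_M[of x] unfolding ff_def
    by (auto intro!: M_cong m_cong simp: mod_simps)
qed
lemma ff_m: "ff k b (mm x) = (if b then MM (x + (14*k - 8)) else mm (x + (- 14*k)))"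
proof -
  have "snd (snd (mm x)) = x mod 24" by (simp add: minor_triad_def)
  then show ?thesis using major_m[of x] unfolding ff_def
    by (auto intro!: M_cong m_cong simp: mod_simps)
qed

definition dm :: "int \<times> bool \<Rightarrow> int \<times> bool \<Rightarrow> int \<times> bool" where
  "dm p q = ((fst p + (if snd p then - fst q else fst q)) mod 12, snd p \<noteq> snd q)"

lemma G1: "a - b = 14 * (j - j mod 12) \<Longrightarrow> (a::int) mod 24 = b mod 24"
proof -
  assume h: "a - b = 14 * (j - j mod 12)"
  have "j - j mod 12 = 12 * (j div 12)" by (simp add: minus_mod_eq_mult_div)
  then have "a - b = 24 * (7 * (j div 12))" using h by simp
  then show ?thesis by (simp add: mod_eq_dvd_iff)
qed
lemma G2: "b - a = 14 * (j - j mod 12) \<Longrightarrow> (a::int) mod 24 = b mod 24"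
  using G1[of b a j] by simp

lemma ff_comp_M: "ff k1 b1 (ff k2 b2 (MM x)) = ff (fst (dm (k1,b1) (k2,b2))) (snd (dm (k1,b1) (k2,b2))) (MM x)"
proof (cases b1; cases b2)
  assume "b1" "b2" then show ?thesis
    by (simp add: ff_M ff_m dm_def) (rule M_cong, rule G1[where j="k1-k2"], simp add: algebra_simps)
next
  assume "b1" "\<not> b2" then show ?thesis
    by (simp add: ff_M ff_m dm_def) (rule m_cong, rule G2[where j="k1-k2"], simp add: algebra_simps)
next
  assume "\<not> b1" "b2" then show ?thesis
    by (simp add: ff_M ff_m dm_def) (rule m_cong, rule G2[where j="k1+k2"], simp add: algebra_simps)
next
  assume "\<not> b1" "\<not> b2" then show ?thesis
    by (simp add: ff_M ff_m dm_def) (rule M_cong, rule G1[where j="k1+k2"], simp add: algebra_simps)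
qed
lemma ff_comp_m: "ff k1 b1 (ff k2 b2 (mm x)) = ff (fst (dm (k1,b1) (k2,b2))) (snd (dm (k1,b1) (k2,b2))) (mm x)"
proof (cases b1; cases b2)
  assume "b1" "b2" then show ?thesis
    by (simp add: ff_M ff_m dm_def) (rule m_cong, rule G2[where j="k1-k2"], simp add: algebra_simps)
next
  assume "b1" "\<not> b2" then show ?thesis
    by (simp add: ff_M ff_m dm_def) (rule M_cong, rule G1[where j="k1-k2"], simp add: algebra_simps)
next
  assume "\<not> b1" "b2" then show ?thesis
    by (simp add: ff_M ff_m dm_def) (rule M_cong, rule G1[where j="k1+k2"], simp add: algebra_simps)
next
  assume "\<not> b1" "\<not> b2" then show ?thesis
    by (simp add: ff_M ff_m dm_def) (rule m_cong, rule G2[where j="k1+k2"], simp add: algebra_simps)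
qed

definition SS :: "int \<Rightarrow> triad set" where
  "SS e = MM ` {x \<in> {0..23}. x mod 2 = e} \<union> mm ` {x \<in> {0..23}. x mod 2 = e}"

lemma S_even_SS: "S_even = SS 0"
  unfolding S_even_def SS_def by (simp add: even_iff_mod_2_eq_zero)
lemma S_odd_SS: "S_odd = SS 1"
  unfolding S_odd_def SS_def by (simp add: odd_iff_mod_2_eq_one)

lemma M_mod: "MM (x mod 24) = MM x" by (rule M_cong) simp
lemma m_mod: "mm (x mod 24) = mm x" by (rule m_cong) simp

lemma mem_SS: "t \<in> SS e \<longleftrightarrow> (\<exists>x. x mod 2 = e \<and> (t = MM x \<or> t = mm x))"
proof
  assume "t \<in> SS e" then show "\<exists>x. x mod 2 = e \<and> (t = MM x \<or> t = mm x)"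
    unfolding SS_def by auto
next
  assume "\<exists>x. x mod 2 = e \<and> (t = MM x \<or> t = mm x)"
  then obtain x where x: "x mod 2 = e" "t = MM x \<or> t = mm x" by blast
  have r: "0 \<le> x mod 24" "x mod 24 < 24" by simp_all
  have p: "x mod 24 mod 2 = x mod 2" by (simp add: mod_mod_cancel)
  have A: "x mod 24 \<in> {x \<in> {0..23}. x mod 2 = e}" using x(1) r p by auto
  show "t \<in> SS e"
  proof (cases "t = MM x")
    case True
    then have "t \<in> MM ` {x \<in> {0..23}. x mod 2 = e}" using A by (metis M_mod image_eqI)
    then show ?thesis unfolding SS_def by (rule UnI1)
  next
    case False
    then have "t = mm x" using x(2) by blast
    then have "t \<in> mm ` {x \<in> {0..23}. x mod 2 = e}" using A by (metis m_mod image_eqI)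
    then show ?thesis unfolding SS_def by (rule UnI2)
  qed
qed

lemma SS_cases:
  assumes "t \<in> SS e"
  obtains x where "x mod 2 = e" "t = MM x" | x where "x mod 2 = e" "t = mm x"
  using assms mem_SS by blast

lemma M_in: "x mod 2 = e \<Longrightarrow> MM x \<in> SS e" using mem_SS by blast
lemma m_in: "x mod 2 = e \<Longrightarrow> mm x \<in> SS e" using mem_SS by blast

lemma par: "x mod 2 = e \<Longrightarrow> (x + 2 * d) mod 2 = e" for x d :: int
  by simp

lemma L_SS: "t \<in> SS e \<Longrightarrow> L_op t \<in> SS e"
proof (erule SS_cases)
  fix x assume "x mod 2 = e" "t = MM x"
  then show ?thesis using par[of x e 4] by (simp add: L_M m_in)
next
  fix x assume "x mod 2 = e" "t = mm x"
  then show ?thesis using par[of x e "-4"] by (simp add: L_m M_in)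
qed
lemma R_SS: "t \<in> SS e \<Longrightarrow> R_op t \<in> SS e"
proof (erule SS_cases)
  fix x assume "x mod 2 = e" "t = MM x"
  then show ?thesis using par[of x e "-3"] by (simp add: R_M m_in)
next
  fix x assume "x mod 2 = e" "t = mm x"
  then show ?thesis using par[of x e "3"] by (simp add: R_m M_in)
qed
lemma ff_SS: "t \<in> SS e \<Longrightarrow> ff k b t \<in> SS e"
proof (erule SS_cases)
  fix x assume "x mod 2 = e" "t = MM x"
  then show ?thesis using par[of x e "4 - 7*k"] par[of x e "7*k"] by (simp add: ff_M m_in M_in)
next
  fix x assume "x mod 2 = e" "t = mm x"
  then show ?thesis using par[of x e "7*k - 4"] par[of x e "-7*k"] by (simp add: ff_m m_in M_in)
qed

lemma ff_comp: "t \<in> SS e \<Longrightarrow> ff k1 b1 (ff k2 b2 t) = ff (fst (dm (k1,b1) (k2,b2))) (snd (dm (k1,b1) (k2,b2))) t"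
  by (erule SS_cases) (simp_all add: ff_comp_M ff_comp_m)

lemma ff_id: "t \<in> SS e \<Longrightarrow> ff 0 False t = t"
  by (erule SS_cases) (simp_all add: ff_M ff_m)

lemma ff_inv: "t \<in> SS e \<Longrightarrow> ff (if b then k else - k) b (ff k b t) = t"
proof -
  assume t: "t \<in> SS e"
  have "dm (if b then k else - k, b) (k, b) = (0, False)" by (simp add: dm_def)
  then show ?thesis using ff_comp[OF t, of "if b then k else - k" b k b] ff_id[OF t] by simp
qed
lemma ff_inv2: "t \<in> SS e \<Longrightarrow> ff k b (ff (if b then k else - k) b t) = t"
proof -
  assume t: "t \<in> SS e"
  have "dm (k, b) (if b then k else - k, b) = (0, False)" by (simp add: dm_def)
  then show ?thesis using ff_comp[OF t, of k b "if b then k else - k" b] ff_id[OF t] by simp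
qed

lemma ff_bij: "bij_betw (ff k b) (SS e) (SS e)"
  by (rule bij_betw_byWitness[where f'="ff (if b then k else - k) b"])
     (simp_all add: ff_SS ff_inv ff_inv2 image_subsetI)


definition psi :: "int \<Rightarrow> int \<times> bool \<Rightarrow> triad \<Rightarrow> triad" where
  "psi e p = restrict (ff (fst p) (snd p)) (SS e)"

lemma psi_Bij: "psi e p \<in> Bij (SS e)"
proof -
  have h: "bij_betw (ff (fst p) (snd p)) (SS e) (SS e)" by (rule ff_bij)
  have "bij_betw (restrict (ff (fst p) (snd p)) (SS e)) (SS e) (SS e) = bij_betw (ff (fst p) (snd p)) (SS e) (SS e)"
    by (rule bij_betw_cong) simp
  then show ?thesis unfolding Bij_def psi_def using h by simp
qed

lemma BijGroup_mult: "f \<in> Bij S \<Longrightarrow> g \<in> Bij S \<Longrightarrow> g \<otimes>\<^bsub>BijGroup S\<^esub> f = compose S g f"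
  by (simp add: BijGroup_def)

lemma psi_mult: "psi e p \<otimes>\<^bsub>BijGroup (SS e)\<^esub> psi e q = psi e (dm p q)"
proof -
  obtain k1 b1 where p: "p = (k1, b1)" by (cases p)
  obtain k2 b2 where q: "q = (k2, b2)" by (cases q)
  have "compose (SS e) (psi e p) (psi e q) = psi e (dm p q)"
    unfolding compose_def psi_def
  proof (rule restrict_ext)
    fix t assume t: "t \<in> SS e"
    have "ff k2 b2 t \<in> SS e" using t by (rule ff_SS)
    then show "restrict (ff (fst p) (snd p)) (SS e) (restrict (ff (fst q) (snd q)) (SS e) t)
        = ff (fst (dm p q)) (snd (dm p q)) t"
      using ff_comp[OF t, of k1 b1 k2 b2] t by (simp add: p q)
  qed
  then show ?thesis by (simp add: BijGroup_mult psi_Bij)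
qed

lemma psi_one: "\<one>\<^bsub>BijGroup (SS e)\<^esub> = psi e (0, False)"
proof -
  have "(\<lambda>x\<in>SS e. x) = restrict (ff 0 False) (SS e)" by (rule restrict_ext) (simp add: ff_id)
  then show ?thesis by (simp add: BijGroup_def psi_def)
qed

lemma D12_mult: "p \<otimes>\<^bsub>D12\<^esub> q = dm p q"
  by (simp add: D12_def dm_def)
lemma D12_carrier: "p \<in> carrier D12 \<longleftrightarrow> fst p \<in> {0..11}"
  by (cases p) (simp add: D12_def)
lemma dm_carrier: "dm p q \<in> carrier D12"
  by (simp add: D12_carrier dm_def)

lemma k_eq: assumes "24 dvd 14 * (k1 - k2)" "k1 \<in> {0..11}" "k2 \<in> {0..11}"
  shows "k1 = (k2::int)"
proof -
  obtain q where "14 * (k1 - k2) = 24 * q" using assms(1) by (elim dvdE)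
  then have "7 * (k1 - k2) = 12 * q" by simp
  then have h7: "7 * k1 - 7 * k2 = 12 * q" by (simp add: algebra_simps)
  have "12 * (7 * q - 4 * (k1 - k2)) = 84 * q - 48 * k1 + 48 * k2" by (simp add: algebra_simps)
  then have "k1 - k2 = 12 * (7 * q - 4 * (k1 - k2))" using h7 by linarith
  then obtain r where r: "k1 - k2 = 12 * r" by blast
  have "r = 0"
  proof (rule ccontr)
    assume "r \<noteq> 0"
    then have "r \<ge> 1 \<or> r \<le> -1" by linarith
    then show False using r assms(2,3) by auto
  qed
  then show ?thesis using r by simp
qed

lemma psi_inj: assumes "e \<in> {0,1}" shows "inj_on (psi e) (carrier D12)"
proof (rule inj_onI)
  fix p q assume p: "p \<in> carrier D12" and q: "q \<in> carrier D12" and eq: "psi e p = psi e q"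
  obtain k1 b1 where p': "p = (k1, b1)" by (cases p)
  obtain k2 b2 where q': "q = (k2, b2)" by (cases q)
  have k: "k1 \<in> {0..11}" "k2 \<in> {0..11}" using p q p' q' by (auto simp: D12_carrier)
  have "e mod 2 = e" using assms by auto
  then have inS: "MM e \<in> SS e" by (rule M_in)
  have E: "ff k1 b1 (MM e) = ff k2 b2 (MM e)"
    using fun_cong[OF eq, of "MM e"] inS by (simp add: psi_def p' q')
  have b: "b1 = b2"
  proof (rule ccontr)
    assume "b1 \<noteq> b2"
    then show False using E M_ne_m[symmetric] M_ne_m by (cases b1) (simp_all add: ff_M)
  qed
  show "p = q"
  proof (cases b1)
    case True
    then have "mm (e + (8 - 14*k1)) = mm (e + (8 - 14*k2))" using E b by (simp add: ff_M)
    then have "snd (snd (mm (e + (8 - 14*k1)))) = snd (snd (mm (e + (8 - 14*k2))))" by simp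
    then have "(e + (8 - 14*k1)) mod 24 = (e + (8 - 14*k2)) mod 24"
      unfolding minor_triad_def by simp
    then have "24 dvd (e + (8 - 14*k1)) - (e + (8 - 14*k2))" by (simp only: mod_eq_dvd_iff)
    moreover have "(e + (8 - 14*k1)) - (e + (8 - 14*k2)) = 14 * (k2 - k1)" by simp
    ultimately have "k2 = k1" using k by (intro k_eq) simp_all
    then show ?thesis using b p' q' by simp
  next
    case False
    then have "MM (e + 14*k1) = MM (e + 14*k2)" using E b by (simp add: ff_M)
    then have "fst (MM (e + 14*k1)) = fst (MM (e + 14*k2))" by simp
    then have "(e + 14*k1) mod 24 = (e + 14*k2) mod 24" unfolding major_triad_def by simp
    then have "24 dvd (e + 14*k1) - (e + 14*k2)" by (simp only: mod_eq_dvd_iff)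
    moreover have "(e + 14*k1) - (e + 14*k2) = 14 * (k1 - k2)" by simp
    ultimately have "k1 = k2" using k by (intro k_eq) simp_all
    then show ?thesis using b p' q' by simp
  qed
qed

lemma psi_selfinv: "inv\<^bsub>BijGroup (SS e)\<^esub> (psi e (k, True)) = psi e (k, True)"
proof -
  interpret G: group "BijGroup (SS e)" by (rule group_BijGroup)
  have c: "psi e (k, True) \<in> carrier (BijGroup (SS e))" by (simp add: BijGroup_def psi_Bij)
  have "psi e (k, True) \<otimes>\<^bsub>BijGroup (SS e)\<^esub> psi e (k, True) = \<one>\<^bsub>BijGroup (SS e)\<^esub>"
    by (simp add: psi_mult psi_one dm_def)
  then show ?thesis using G.inv_equality c by blast
qed

lemma l_psi: "restrict L_op (SS e) = psi e (0, True)"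
  unfolding psi_def
  by (rule restrict_ext, erule SS_cases) (simp_all add: L_M L_m ff_M ff_m)
lemma r_psi: "restrict R_op (SS e) = psi e (1, True)"
  unfolding psi_def
  by (rule restrict_ext, erule SS_cases) (simp_all add: R_M R_m ff_M ff_m)
lemma gen_sub: "generate (BijGroup (SS e)) {restrict L_op (SS e), restrict R_op (SS e)} \<subseteq> psi e ` carrier D12"
proof
  fix h assume "h \<in> generate (BijGroup (SS e)) {restrict L_op (SS e), restrict R_op (SS e)}"
  then show "h \<in> psi e ` carrier D12"
  proof induction
    case one then show ?case by (auto simp: psi_one D12_carrier)
  next
    case (incl h) then show ?case by (auto simp: l_psi r_psi D12_carrier)
  next
    case (inv h) then show ?case by (auto simp: l_psi r_psi psi_selfinv D12_carrier)
  next
    case (eng h1 h2) then show ?case using dm_carrier by (auto simp: psi_mult)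
  qed
qed

lemma sub_gen: "psi e ` carrier D12 \<subseteq> generate (BijGroup (SS e)) {restrict L_op (SS e), restrict R_op (SS e)}"
proof -
  let ?g = "generate (BijGroup (SS e)) {restrict L_op (SS e), restrict R_op (SS e)}"
  have l: "psi e (0, True) \<in> ?g" by (metis l_psi generate.incl insertI1)
  have r: "psi e (1, True) \<in> ?g" by (metis r_psi generate.incl insertI1 insertI2)
  have rho: "psi e (1, False) \<in> ?g"
    using generate.eng[OF r l] by (simp add: psi_mult dm_def)
  have pw: "psi e (int n mod 12, False) \<in> ?g" for n
  proof (induction n)
    case 0 then show ?case using generate.one[of "BijGroup (SS e)"] by (simp add: psi_one)
  next
    case (Suc n)
    have "psi e (1, False) \<otimes>\<^bsub>BijGroup (SS e)\<^esub> psi e (int n mod 12, False) = psi e (int (Suc n) mod 12, False)"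
      by (simp add: psi_mult dm_def mod_simps add.commute)
    then show ?case using generate.eng[OF rho Suc] by simp
  qed
  show ?thesis
  proof
    fix h assume "h \<in> psi e ` carrier D12"
    then obtain k b where kb: "k \<in> {0..11}" "h = psi e (k, b)" by (auto simp: D12_carrier)
    then have km: "int (nat k) mod 12 = k" by (simp add: mod_pos_pos_trivial)
    have a: "psi e (k, False) \<in> ?g" using pw[of "nat k"] km by simp
    show "h \<in> ?g"
    proof (cases b)
      case True
      have "psi e (k, False) \<otimes>\<^bsub>BijGroup (SS e)\<^esub> psi e (0, True) = psi e (k, True)"
        using kb by (simp add: psi_mult dm_def mod_pos_pos_trivial)
      then show ?thesis using generate.eng[OF a l] kb True by simp
    next
      case False then show ?thesis using a kb by simp
    qed
  qed
qed

lemma LR_iso: assumes "e \<in> {0,1}" shows "LR_group (SS e) \<cong> D12"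
proof -
  let ?g = "generate (BijGroup (SS e)) {restrict L_op (SS e), restrict R_op (SS e)}"
  have img: "psi e ` carrier D12 = ?g" using gen_sub sub_gen by blast
  have bij: "bij_betw (psi e) (carrier D12) ?g"
    using img psi_inj[OF assms] by (simp add: bij_betw_def)
  define phi where "phi = inv_into (carrier D12) (psi e)"
  have cG: "carrier (LR_group (SS e)) = ?g" by (simp add: LR_group_def)
  have mG: "x \<otimes>\<^bsub>LR_group (SS e)\<^esub> y = x \<otimes>\<^bsub>BijGroup (SS e)\<^esub> y" for x y
    by (simp add: LR_group_def)
  have b2: "bij_betw phi ?g (carrier D12)" unfolding phi_def using bij by (rule bij_betw_inv_into)
  have "phi \<in> hom (LR_group (SS e)) D12"
    unfolding hom_def
  proof (safe)
    fix x assume "x \<in> carrier (LR_group (SS e))"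
    then show "phi x \<in> carrier D12" using b2 cG bij_betwE by blast
  next
    fix x y assume x: "x \<in> carrier (LR_group (SS e))" and y: "y \<in> carrier (LR_group (SS e))"
    have "x \<in> psi e ` carrier D12" using x cG img by simp
    then obtain p where p: "p \<in> carrier D12" "x = psi e p" by (elim imageE) simp
    have "y \<in> psi e ` carrier D12" using y cG img by simp
    then obtain q where q: "q \<in> carrier D12" "y = psi e q" by (elim imageE) simp
    have inj: "inj_on (psi e) (carrier D12)" using psi_inj[OF assms] .
    show "phi (x \<otimes>\<^bsub>LR_group (SS e)\<^esub> y) = phi x \<otimes>\<^bsub>D12\<^esub> phi y"
      unfolding mG p(2) q(2) psi_mult phi_def D12_mult
      using inv_into_f_f[OF inj] p(1) q(1) dm_carrier by simp
  qed
  then have "phi \<in> iso (LR_group (SS e)) D12" using b2 cG by (simp add: iso_def)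
  then show ?thesis by (rule is_isoI)
qed

theorem mainTheorem7:
  shows "(\<forall>t\<in>S_even. L_op t \<in> S_even) \<and> (\<forall>t\<in>S_even. R_op t \<in> S_even)
       \<and> (\<forall>t\<in>S_odd. L_op t \<in> S_odd) \<and> (\<forall>t\<in>S_odd. R_op t \<in> S_odd)
       \<and> LR_group S_even \<cong> D12 \<and> LR_group S_odd \<cong> D12"
  unfolding S_even_SS S_odd_SS
  using L_SS R_SS LR_iso[of 0] LR_iso[of 1] by simp

end
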